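(* Let $K$ be a field of characteristic different from $2$, let $c\in K$, let $f=x^2+c\in K[x]$, and let $\alpha\in K$. Assume that the backward orbit $f^{-\infty}(\alpha)=\bigcup_{n\ge 1}(f^n)^{-1}(\alpha)\subseteq\overline{K}$ does not contain $0$ (the unique critical point of $f$ in $\overline{K}$). Define $c_1=-c$ and $c_n=f(c_{n-1})$ for $n\ge 2$, and set $c_{1,\alpha}=c_1+\alpha$ and $c_{n,\alpha}=c_n-\alpha$ for $n\ge 2$. If the Galois group $G_\infty(f,\alpha)$ is abelian and $f-\alpha$ is irreducible over $K$, then the $\mathbb{F}_2$-subspace of $K^{\times}/(K^{\times})^2$ spanned by the classes of the elements $c_{n,\alpha}$, $n\ge 1$, has dimension $1$.
   Context: For $n\ge1$, $f^n$ denotes the $n$-th iterate of $f$, $K_n(f,\alpha)$ the splitting field of $f^n-\alpha$ over $K$, and $K_\infty(f,\alpha)=\bigcup_n K_n(f,\alpha)$. The dynamical Galois group $G_\infty(f,\alpha)$ is the Galois group of $K_\infty(f,\alpha)/K$ (equivalently the inverse limit of the Galois groups of $K_n(f,\alpha)/K$). The hypothesis on the backward orbit ensures $c_{n,\alpha}\neq 0$, so these define classes in $K^\times/(K^\times)^2$, which is viewed as an $\mathbb{F}_2$-vector space. *)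

theory Defs
  imports "HOL-Algebra.Algebraic_Closure_Type"
begin

definition is_subfield :: "'a::field set \<Rightarrow> bool" where
  "is_subfield F \<longleftrightarrow> 0 \<in> F \<and> 1 \<in> F \<and>
     (\<forall>x\<in>F. \<forall>y\<in>F. x + y \<in> F \<and> x * y \<in> F) \<and>
     (\<forall>x\<in>F. - x \<in> F \<and> inverse x \<in> F)"

definition gen_subfield :: "'a::field set \<Rightarrow> 'a set" where
  "gen_subfield S = \<Inter> {F. is_subfield F \<and> S \<subseteq> F}"

definition fbar :: "'k::field \<Rightarrow> 'k alg_closure \<Rightarrow> 'k alg_closure" where
  "fbar c z = z ^ 2 + to_ac c"

definition backward_orbit :: "'k::field \<Rightarrow> 'k \<Rightarrow> 'k alg_closure set" where
  "backward_orbit c \<alpha> = {z. \<exists>n\<ge>1. (fbar c ^^ n) z = to_ac \<alpha>}"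

definition Kn :: "'k::field \<Rightarrow> 'k \<Rightarrow> nat \<Rightarrow> 'k alg_closure set" where
  "Kn c \<alpha> n = gen_subfield (range to_ac \<union> {z. (fbar c ^^ n) z = to_ac \<alpha>})"

definition Kinf :: "'k::field \<Rightarrow> 'k \<Rightarrow> 'k alg_closure set" where
  "Kinf c \<alpha> = (\<Union>n\<in>{1..}. Kn c \<alpha> n)"

definition Ginf :: "'k::field \<Rightarrow> 'k \<Rightarrow> ('k alg_closure \<Rightarrow> 'k alg_closure) set" where
  "Ginf c \<alpha> = {\<sigma>. bij_betw \<sigma> (Kinf c \<alpha>) (Kinf c \<alpha>) \<and>
      (\<forall>x\<in>Kinf c \<alpha>. \<forall>y\<in>Kinf c \<alpha>. \<sigma> (x + y) = \<sigma> x + \<sigma> y \<and> \<sigma> (x * y) = \<sigma> x * \<sigma> y) \<and>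
      (\<forall>a. \<sigma> (to_ac a) = to_ac a)}"

definition Ginf_abelian :: "'k::field \<Rightarrow> 'k \<Rightarrow> bool" where
  "Ginf_abelian c \<alpha> \<longleftrightarrow>
     (\<forall>\<sigma>\<in>Ginf c \<alpha>. \<forall>\<tau>\<in>Ginf c \<alpha>. \<forall>x\<in>Kinf c \<alpha>. \<sigma> (\<tau> x) = \<tau> (\<sigma> x))"

definition cseq :: "'k::field \<Rightarrow> nat \<Rightarrow> 'k" where
  "cseq c n = ((\<lambda>x. x ^ 2 + c) ^^ (n - 1)) (- c)"

definition cseq_alpha :: "'k::field \<Rightarrow> 'k \<Rightarrow> nat \<Rightarrow> 'k" where
  "cseq_alpha c \<alpha> n = (if n = 1 then cseq c 1 + \<alpha> else cseq c n - \<alpha>)"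

definition sq_class :: "'k::field \<Rightarrow> 'k set" where
  "sq_class x = {x * y ^ 2 | y. y \<noteq> 0}"

text \<open>F_2-span of the classes of c_{n,alpha} (n >= 1) in K^x/(K^x)^2:
  the classes of all finite products of them.\<close>
definition c_span :: "'k::field \<Rightarrow> 'k \<Rightarrow> 'k set set" where
  "c_span c \<alpha> = {sq_class (\<Prod>n\<in>S. cseq_alpha c \<alpha> n) | S. finite S \<and> S \<subseteq> {1..}}"

end

theory Submission
  imports Defs
begin

lemma sqrt_ex: "\<exists>y::'a::alg_closed_field. y ^ 2 = a"
proof -
  have "degree [:-a, 0, 1:] > 0" by simp
  then obtain y where "poly [:-a, 0, 1:] y = 0" using alg_closed_imp_poly_has_root by blast
  then have "y ^ 2 = a" by (simp add: power2_eq_square algebra_simps)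
  then show ?thesis by blast
qed

lemma sq_eq_cases: "(x::'a::field) ^ 2 = y ^ 2 \<Longrightarrow> x = y \<or> x = - y"
  by (metis power2_eq_iff)

lemma is_subfieldD:
  assumes "is_subfield F"
  shows "0 \<in> F" "1 \<in> F" "x \<in> F \<Longrightarrow> y \<in> F \<Longrightarrow> x + y \<in> F"
    "x \<in> F \<Longrightarrow> y \<in> F \<Longrightarrow> x * y \<in> F" "x \<in> F \<Longrightarrow> - x \<in> F"
    "x \<in> F \<Longrightarrow> inverse x \<in> F"
  using assms unfolding is_subfield_def by auto

lemma sf_diff: "is_subfield F \<Longrightarrow> x \<in> F \<Longrightarrow> y \<in> F \<Longrightarrow> x - y \<in> F"
  using is_subfieldD(3)[of F x "-y"] is_subfieldD(5)[of F y] by simp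

lemma sf_divide: "is_subfield F \<Longrightarrow> x \<in> F \<Longrightarrow> y \<in> F \<Longrightarrow> x / y \<in> F"
  using is_subfieldD(4)[of F x "inverse y"] is_subfieldD(6)[of F y] by (simp add: divide_inverse)

lemma sf_power: "is_subfield F \<Longrightarrow> x \<in> F \<Longrightarrow> x ^ n \<in> F"
  by (induction n) (auto intro: is_subfieldD)

lemma gen_subfield_sf: "is_subfield (gen_subfield S)"
  unfolding gen_subfield_def is_subfield_def by auto

lemma gen_subfield_sub: "S \<subseteq> gen_subfield S"
  unfolding gen_subfield_def by auto

lemma gen_subfield_min: "is_subfield F \<Longrightarrow> S \<subseteq> F \<Longrightarrow> gen_subfield S \<subseteq> F"
  unfolding gen_subfield_def by auto

definition Rt :: "'k::field \<Rightarrow> 'k \<Rightarrow> nat \<Rightarrow> 'k alg_closure set" where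
  "Rt c \<alpha> n = {z. (fbar c ^^ n) z = to_ac \<alpha>}"

lemma Kn_alt: "Kn c \<alpha> n = gen_subfield (range to_ac \<union> Rt c \<alpha> n)"
  unfolding Kn_def Rt_def by simp

lemma Kn_sf: "is_subfield (Kn c \<alpha> n)"
  unfolding Kn_def by (rule gen_subfield_sf)

lemma Kn_to_ac: "to_ac a \<in> Kn c \<alpha> n"
  unfolding Kn_alt by (rule subsetD[OF gen_subfield_sub]) simp

lemma Kn_Rt: "z \<in> Rt c \<alpha> n \<Longrightarrow> z \<in> Kn c \<alpha> n"
  unfolding Kn_alt by (rule subsetD[OF gen_subfield_sub]) simp

lemma Rt_Suc: "z \<in> Rt c \<alpha> (Suc n) \<longleftrightarrow> fbar c z \<in> Rt c \<alpha> n"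
  unfolding Rt_def funpow_Suc_right comp_def by simp

lemma Kn_Suc: "Kn c \<alpha> n \<subseteq> Kn c \<alpha> (Suc n)"
proof -
  have "Rt c \<alpha> n \<subseteq> Kn c \<alpha> (Suc n)"
  proof
    fix z assume z: "z \<in> Rt c \<alpha> n"
    obtain y where y: "y ^ 2 = z - to_ac c" using sqrt_ex by blast
    have "fbar c y = z" using y by (simp add: fbar_def)
    then have "y \<in> Rt c \<alpha> (Suc n)" using z Rt_Suc by metis
    then have "y \<in> Kn c \<alpha> (Suc n)" by (rule Kn_Rt)
    then have "y ^ 2 + to_ac c \<in> Kn c \<alpha> (Suc n)"
      using sf_power[OF Kn_sf] is_subfieldD(3)[OF Kn_sf] Kn_to_ac by blast
    then show "z \<in> Kn c \<alpha> (Suc n)" using y by simp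
  qed
  then have "range to_ac \<union> Rt c \<alpha> n \<subseteq> Kn c \<alpha> (Suc n)" using Kn_to_ac by auto
  then show ?thesis unfolding Kn_alt[of c \<alpha> n] by (rule gen_subfield_min[OF Kn_sf])
qed

lemma Kn_mono: "n \<le> m \<Longrightarrow> Kn c \<alpha> n \<subseteq> Kn c \<alpha> m"
  by (rule lift_Suc_mono_le[of "Kn c \<alpha>", OF Kn_Suc])

lemma Kinf_sf: "is_subfield (Kinf c \<alpha>)"
proof -
  have two: "x \<in> Kinf c \<alpha> \<Longrightarrow> y \<in> Kinf c \<alpha> \<Longrightarrow> \<exists>k\<ge>1. x \<in> Kn c \<alpha> k \<and> y \<in> Kn c \<alpha> k" for x y
  proof -
    assume "x \<in> Kinf c \<alpha>" "y \<in> Kinf c \<alpha>"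
    then obtain i j where "i \<ge> 1" "j \<ge> 1" "x \<in> Kn c \<alpha> i" "y \<in> Kn c \<alpha> j"
      unfolding Kinf_def by auto
    moreover have "Kn c \<alpha> i \<subseteq> Kn c \<alpha> (max i j)" "Kn c \<alpha> j \<subseteq> Kn c \<alpha> (max i j)"
      by (simp_all add: Kn_mono)
    ultimately show ?thesis by (intro exI[of _ "max i j"]) auto
  qed
  have one: "x \<in> Kinf c \<alpha> \<longleftrightarrow> (\<exists>k\<ge>1. x \<in> Kn c \<alpha> k)" for x
    unfolding Kinf_def by auto
  show ?thesis unfolding is_subfield_def
  proof (intro conjI ballI)
    show "0 \<in> Kinf c \<alpha>" "1 \<in> Kinf c \<alpha>" unfolding one
      using Kn_sf is_subfieldD by blast+
  next
    fix x y assume "x \<in> Kinf c \<alpha>" "y \<in> Kinf c \<alpha>"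
    then obtain k where k: "k \<ge> 1" "x \<in> Kn c \<alpha> k" "y \<in> Kn c \<alpha> k" using two by blast
    then show "x + y \<in> Kinf c \<alpha>" "x * y \<in> Kinf c \<alpha>"
      unfolding one using is_subfieldD(3,4)[OF Kn_sf, of x c \<alpha> k y] by auto
  next
    fix x assume "x \<in> Kinf c \<alpha>"
    then obtain k where k: "k \<ge> 1" "x \<in> Kn c \<alpha> k" unfolding one by blast
    then show "- x \<in> Kinf c \<alpha>" "inverse x \<in> Kinf c \<alpha>"
      unfolding one using is_subfieldD(5,6)[OF Kn_sf, of x c \<alpha> k] by auto
  qed
qed

lemma Kinf_to_ac: "to_ac a \<in> Kinf c \<alpha>"
  unfolding Kinf_def using Kn_to_ac by blast

lemma Kinf_Rt: "z \<in> Rt c \<alpha> n \<Longrightarrow> n \<ge> 1 \<Longrightarrow> z \<in> Kinf c \<alpha>"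
  unfolding Kinf_def using Kn_Rt by blast

lemma Kinf_sub: "is_subfield F \<Longrightarrow> range to_ac \<subseteq> F \<Longrightarrow> (\<And>n z. n \<ge> 1 \<Longrightarrow> z \<in> Rt c \<alpha> n \<Longrightarrow> z \<in> F)
   \<Longrightarrow> Kinf c \<alpha> \<subseteq> F"
proof -
  assume F: "is_subfield F" "range to_ac \<subseteq> F" "\<And>n z. n \<ge> 1 \<Longrightarrow> z \<in> Rt c \<alpha> n \<Longrightarrow> z \<in> F"
  have "Kn c \<alpha> n \<subseteq> F" if "n \<ge> 1" for n
    unfolding Kn_alt using gen_subfield_min[OF F(1)] F(2) F(3)[OF that] by blast
  then show ?thesis unfolding Kinf_def by auto
qed


definition hom_on :: "'a::field set \<Rightarrow> ('a \<Rightarrow> 'a) \<Rightarrow> bool" where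
  "hom_on E \<phi> \<longleftrightarrow> (\<forall>x\<in>E. \<forall>y\<in>E. \<phi> (x + y) = \<phi> x + \<phi> y \<and> \<phi> (x * y) = \<phi> x * \<phi> y)"

locale fhom =
  fixes E :: "'a::field set" and \<phi> :: "'a \<Rightarrow> 'a"
  assumes sf: "is_subfield E" and hom: "hom_on E \<phi>" and one: "\<phi> 1 = 1"
begin

lemma add: "x \<in> E \<Longrightarrow> y \<in> E \<Longrightarrow> \<phi> (x + y) = \<phi> x + \<phi> y"
  using hom unfolding hom_on_def by blast

lemma mult: "x \<in> E \<Longrightarrow> y \<in> E \<Longrightarrow> \<phi> (x * y) = \<phi> x * \<phi> y"
  using hom unfolding hom_on_def by blast

lemma zero: "\<phi> 0 = 0"
proof -
  have "\<phi> 0 + \<phi> 0 = \<phi> 0 + 0" using add[of 0 0] is_subfieldD(1)[OF sf] by simp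
  then show ?thesis by (simp only: add_left_cancel)
qed

lemma uminus: "x \<in> E \<Longrightarrow> \<phi> (- x) = - \<phi> x"
proof -
  assume x: "x \<in> E"
  have "\<phi> x + \<phi> (- x) = 0" using add[of x "-x"] is_subfieldD(5)[OF sf] zero x by simp
  then show ?thesis by (metis neg_eq_iff_add_eq_0)
qed

lemma diff: "x \<in> E \<Longrightarrow> y \<in> E \<Longrightarrow> \<phi> (x - y) = \<phi> x - \<phi> y"
  using add[of x "-y"] uminus[of y] is_subfieldD(5)[OF sf] by simp

lemma sq: "x \<in> E \<Longrightarrow> \<phi> (x ^ 2) = \<phi> x ^ 2"
  using mult[of x x] by (simp add: power2_eq_square)

lemma nonzero: "x \<in> E \<Longrightarrow> x \<noteq> 0 \<Longrightarrow> \<phi> x \<noteq> 0"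
  using mult[of x "inverse x"] is_subfieldD(6)[OF sf] one by auto

lemma inverse: "x \<in> E \<Longrightarrow> \<phi> (inverse x) = inverse (\<phi> x)"
proof (cases "x = 0")
  case True then show ?thesis using zero by simp
next
  case False
  assume x: "x \<in> E"
  have "\<phi> x * \<phi> (inverse x) = 1"
    using mult[of x "inverse x"] is_subfieldD(6)[OF sf] one x False by simp
  then show ?thesis by (metis inverse_unique)
qed

lemma inj: "inj_on \<phi> E"
proof (rule inj_onI)
  fix x y assume "x \<in> E" "y \<in> E" "\<phi> x = \<phi> y"
  then have "\<phi> (x - y) = 0" using diff by simp
  then show "x = y" using nonzero[of "x - y"] sf_diff[OF sf] \<open>x \<in> E\<close> \<open>y \<in> E\<close> by auto
qed

end

definition fn :: "('a \<times> 'a) set \<Rightarrow> 'a \<Rightarrow> 'a" where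
  "fn R x = (THE y. (x, y) \<in> R)"

lemma fn_eq: "single_valued R \<Longrightarrow> (x, y) \<in> R \<Longrightarrow> fn R x = y"
  unfolding fn_def by (rule the_equality) (assumption, metis single_valuedD)

lemma fn_in: "single_valued R \<Longrightarrow> x \<in> Domain R \<Longrightarrow> (x, fn R x) \<in> R"
  by (metis DomainE fn_eq)

definition valid :: "'k::field \<Rightarrow> 'k \<Rightarrow> ('k alg_closure \<times> 'k alg_closure) set \<Rightarrow> bool" where
  "valid c \<alpha> R \<longleftrightarrow> single_valued R \<and> is_subfield (Domain R) \<and> Domain R \<subseteq> Kinf c \<alpha> \<and>
     hom_on (Domain R) (fn R) \<and> (\<forall>a. (to_ac a, to_ac a) \<in> R)"

lemma valid_fhom: "valid c \<alpha> R \<Longrightarrow> fhom (Domain R) (fn R)"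
proof -
  assume V: "valid c \<alpha> R"
  have "(to_ac 1, to_ac 1) \<in> R" using V unfolding valid_def by blast
  then have "fn R 1 = 1" using fn_eq[of R 1 1] V unfolding valid_def by simp
  then show ?thesis using V unfolding valid_def fhom_def by blast
qed

lemma valid_to_ac: "valid c \<alpha> R \<Longrightarrow> fn R (to_ac a) = to_ac a"
  unfolding valid_def using fn_eq[of R "to_ac a" "to_ac a"] by simp

lemma valid_to_ac_dom: "valid c \<alpha> R \<Longrightarrow> to_ac a \<in> Domain R"
  unfolding valid_def by (meson Domain.DomainI)

definition ext :: "('a::field \<times> 'a) set \<Rightarrow> 'a \<Rightarrow> 'a \<Rightarrow> ('a \<times> 'a) set" where
  "ext R x y = {(a + b * x, fn R a + fn R b * y) | a b. a \<in> Domain R \<and> b \<in> Domain R}"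

lemma step:
  assumes V: "valid c \<alpha> R" and xK: "x \<in> Kinf c \<alpha>" and xn: "x \<notin> Domain R"
    and e: "x ^ 2 \<in> Domain R" and y: "y ^ 2 = fn R (x ^ 2)"
  shows "valid c \<alpha> (ext R x y)" "R \<subseteq> ext R x y" "(x, y) \<in> ext R x y"
    "Domain (ext R x y) = {a + b * x | a b. a \<in> Domain R \<and> b \<in> Domain R}"
proof -
  define E where "E = Domain R"
  define \<phi> where "\<phi> = fn R"
  interpret fhom E \<phi> using valid_fhom[OF V] unfolding E_def \<phi>_def .
  have sv: "single_valued R" using V unfolding valid_def by blast
  have sfE: "is_subfield E" by (rule sf)
  note cl = is_subfieldD[OF sfE] sf_diff[OF sfE] sf_divide[OF sfE]
  have eE: "x ^ 2 \<in> E" using e E_def by simp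
  have uniq: "a = a' \<and> b = b'" if "a \<in> E" "b \<in> E" "a' \<in> E" "b' \<in> E" "a + b * x = a' + b' * x"
    for a b a' b'
  proof (cases "b = b'")
    case True then show ?thesis using that by simp
  next
    case False
    then have "x = (a - a') / (b' - b)" using that(5)
      by (simp add: field_simps)
    then have "x \<in> E" using cl that by simp
    then show ?thesis using xn E_def by simp
  qed
  define E' where "E' = {a + b * x | a b. a \<in> E \<and> b \<in> E}"
  have dom: "Domain (ext R x y) = E'" unfolding ext_def E'_def E_def by blast
  have sv': "single_valued (ext R x y)"
    unfolding single_valued_def ext_def using uniq unfolding E_def by blast
  have fn': "fn (ext R x y) (a + b * x) = \<phi> a + \<phi> b * y" if "a \<in> E" "b \<in> E" for a b
    using fn_eq[OF sv', of "a + b * x"] that unfolding ext_def E_def \<phi>_def by blast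
  have inE': "a + b * x \<in> E'" if "a \<in> E" "b \<in> E" for a b
    using that unfolding E'_def by blast
  have x2: "x * x = x ^ 2" by (simp add: power2_eq_square)
  have prod: "(a + b * x) * (a' + b' * x) = (a * a' + (b * b') * x ^ 2) + (a * b' + a' * b) * x" for a b a' b'
    by (simp add: algebra_simps power2_eq_square)
  have sfE': "is_subfield E'"
    unfolding is_subfield_def
  proof (intro conjI ballI)
    show "0 \<in> E'" using inE'[of 0 0] cl by simp
    show "1 \<in> E'" using inE'[of 1 0] cl by simp
  next
    fix u v assume "u \<in> E'" "v \<in> E'"
    then obtain a b a' b' where u: "u = a + b * x" "a \<in> E" "b \<in> E" and v: "v = a' + b' * x" "a' \<in> E" "b' \<in> E"
      unfolding E'_def by blast
    have "u + v = (a + a') + (b + b') * x" using u v by (simp add: algebra_simps)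
    then show "u + v \<in> E'" using inE'[OF cl(3)[OF u(2) v(2)] cl(3)[OF u(3) v(3)]] by simp
    have "u * v = (a * a' + (b * b') * x ^ 2) + (a * b' + a' * b) * x" using u v prod by simp
    moreover have "a * a' + (b * b') * x ^ 2 \<in> E" "a * b' + a' * b \<in> E"
      using cl u v eE by simp_all
    ultimately show "u * v \<in> E'" using inE' by simp
  next
    fix u assume "u \<in> E'"
    then obtain a b where u: "u = a + b * x" "a \<in> E" "b \<in> E" unfolding E'_def by blast
    have "- u = (- a) + (- b) * x" using u by simp
    then show "- u \<in> E'" using inE'[OF cl(5)[OF u(2)] cl(5)[OF u(3)]] by simp
    show "inverse u \<in> E'"
    proof (cases "u = 0")
      case True then show ?thesis using inE'[of 0 0] cl by simp
    next
      case False
      define N where "N = a ^ 2 - b ^ 2 * x ^ 2"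
      have N0: "N \<noteq> 0"
      proof
        assume N: "N = 0"
        show False
        proof (cases "b = 0")
          case True then show False using N u False by (simp add: N_def)
        next
          case False
          then have "x ^ 2 = (a / b) ^ 2" using N unfolding N_def by (simp add: field_simps)
          then have "x = a / b \<or> x = - (a / b)" by (rule sq_eq_cases)
          then have "x \<in> E" using cl u by auto
          then show False using xn E_def by simp
        qed
      qed
      have pN: "(a + b * x) * (a - b * x) = N" by (simp add: N_def algebra_simps power2_eq_square)
      have "(a / N) + (- b / N) * x = (a - b * x) / N" by (simp add: diff_divide_distrib)
      then have "u * ((a / N) + (- b / N) * x) = ((a + b * x) * (a - b * x)) / N" using u by simp
      also have "\<dots> = 1" using pN N0 by simp
      finally have "u * ((a / N) + (- b / N) * x) = 1" .
      then have "inverse u = (a / N) + (- b / N) * x" by (rule inverse_unique)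
      moreover have "N \<in> E" unfolding N_def using cl eE u sf_power[OF sfE] by simp
      then have "a / N \<in> E" "- b / N \<in> E" using cl u by simp_all
      then have "(a / N) + (- b / N) * x \<in> E'" by (rule inE')
      with calculation show ?thesis by simp
    qed
  qed
  have Kin: "E' \<subseteq> Kinf c \<alpha>"
  proof
    fix u assume "u \<in> E'"
    then obtain a b where u: "u = a + b * x" "a \<in> E" "b \<in> E" unfolding E'_def by blast
    have "E \<subseteq> Kinf c \<alpha>" using V unfolding valid_def E_def by blast
    then have "a \<in> Kinf c \<alpha>" "b \<in> Kinf c \<alpha>" using u by auto
    then show "u \<in> Kinf c \<alpha>" unfolding u(1) using xK
      by (intro is_subfieldD(3)[OF Kinf_sf] is_subfieldD(4)[OF Kinf_sf])
  qed
  have homE': "hom_on E' (fn (ext R x y))"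
    unfolding hom_on_def
  proof (intro ballI conjI)
    fix u v assume "u \<in> E'" "v \<in> E'"
    then obtain a b a' b' where u: "u = a + b * x" "a \<in> E" "b \<in> E" and v: "v = a' + b' * x" "a' \<in> E" "b' \<in> E"
      unfolding E'_def by blast
    have uv: "u + v = (a + a') + (b + b') * x" using u v by (simp add: algebra_simps)
    have "fn (ext R x y) (u + v) = \<phi> (a + a') + \<phi> (b + b') * y"
      unfolding uv by (rule fn'[OF cl(3)[OF u(2) v(2)] cl(3)[OF u(3) v(3)]])
    also have "\<dots> = (\<phi> a + \<phi> b * y) + (\<phi> a' + \<phi> b' * y)"
      using add[OF u(2) v(2)] add[OF u(3) v(3)] by (simp add: algebra_simps)
    also have "\<dots> = fn (ext R x y) u + fn (ext R x y) v" using fn' u v by simp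
    finally show "fn (ext R x y) (u + v) = fn (ext R x y) u + fn (ext R x y) v" .
    have i1: "a * a' + (b * b') * x ^ 2 \<in> E" "a * b' + a' * b \<in> E"
      using cl u v eE by simp_all
    have "fn (ext R x y) (u * v) = \<phi> (a * a' + (b * b') * x ^ 2) + \<phi> (a * b' + a' * b) * y"
      unfolding u(1) v(1) prod by (rule fn'[OF i1])
    also have "\<dots> = \<phi> a * \<phi> a' + \<phi> b * \<phi> b' * y ^ 2 + (\<phi> a * \<phi> b' + \<phi> a' * \<phi> b) * y"
      using u v cl eE add mult y \<phi>_def by simp
    also have "\<dots> = (\<phi> a + \<phi> b * y) * (\<phi> a' + \<phi> b' * y)"
      by (simp add: algebra_simps power2_eq_square)
    also have "\<dots> = fn (ext R x y) u * fn (ext R x y) v" using fn' u v by simp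
    finally show "fn (ext R x y) (u * v) = fn (ext R x y) u * fn (ext R x y) v" .
  qed
  have toac: "(to_ac a, to_ac a) \<in> ext R x y" for a
  proof -
    have "to_ac a \<in> E" "\<phi> (to_ac a) = to_ac a" using valid_to_ac[OF V] valid_to_ac_dom[OF V]
      unfolding E_def \<phi>_def by simp_all
    then show ?thesis unfolding ext_def E_def[symmetric] using cl zero
      by (intro CollectI exI[of _ "to_ac a"] exI[of _ 0]) (simp add: \<phi>_def)
  qed
  show "valid c \<alpha> (ext R x y)"
    unfolding valid_def using sv' sfE' Kin homE' toac dom by simp
  show "R \<subseteq> ext R x y"
  proof
    fix p assume p: "p \<in> R"
    obtain a v where pa: "p = (a, v)" by (cases p)
    then have "a \<in> E" "v = \<phi> a" using p fn_eq[OF sv] E_def \<phi>_def by auto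
    then show "p \<in> ext R x y" unfolding ext_def E_def[symmetric] \<phi>_def[symmetric] pa
      using cl zero by (intro CollectI exI[of _ a] exI[of _ 0]) simp
  qed
  show "(x, y) \<in> ext R x y"
    unfolding ext_def E_def[symmetric] \<phi>_def[symmetric]
    using cl zero one by (intro CollectI exI[of _ 0] exI[of _ 1]) simp
  show "Domain (ext R x y) = {a + b * x | a b. a \<in> Domain R \<and> b \<in> Domain R}"
    using dom E'_def E_def by simp
qed


lemma chain_valid:
  assumes C: "C \<in> chains A" "C \<noteq> {}" and allv: "\<And>R. R \<in> C \<Longrightarrow> valid c \<alpha> R"
  shows "valid c \<alpha> (\<Union>C)"
proof -
  have ch: "R1 \<subseteq> R2 \<or> R2 \<subseteq> R1" if "R1 \<in> C" "R2 \<in> C" for R1 R2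
    using C(1) that unfolding chains_def chain_subset_def by blast
  have svR: "single_valued R" if "R \<in> C" for R using allv[OF that] unfolding valid_def by blast
  have sv: "single_valued (\<Union>C)"
    unfolding single_valued_def
  proof (intro allI impI)
    fix x y z assume "(x, y) \<in> \<Union>C" "(x, z) \<in> \<Union>C"
    then obtain R1 R2 where r: "R1 \<in> C" "R2 \<in> C" "(x, y) \<in> R1" "(x, z) \<in> R2" by blast
    show "y = z"
    proof (cases "R1 \<subseteq> R2")
      case True then show ?thesis using r svR[OF r(2)] by (meson single_valuedD subsetD)
    next
      case False then have "R2 \<subseteq> R1" using ch[OF r(1,2)] by blast
      then show ?thesis using r svR[OF r(1)] by (meson single_valuedD subsetD)
    qed
  qed
  have fnU: "fn (\<Union>C) x = fn R x" if "R \<in> C" "x \<in> Domain R" for R x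
  proof -
    have "(x, fn R x) \<in> R" using fn_in[OF svR[OF that(1)] that(2)] .
    then have "(x, fn R x) \<in> \<Union>C" using that(1) by blast
    then show ?thesis by (rule fn_eq[OF sv])
  qed
  have dom: "Domain (\<Union>C) = (\<Union>R\<in>C. Domain R)" by (rule Domain_Union)
  have common: "\<exists>R\<in>C. x \<in> Domain R \<and> y \<in> Domain R" if "x \<in> Domain (\<Union>C)" "y \<in> Domain (\<Union>C)" for x y
  proof -
    from that(1) obtain R1 where r1: "R1 \<in> C" "x \<in> Domain R1" unfolding dom by (rule UN_E)
    from that(2) obtain R2 where r2: "R2 \<in> C" "y \<in> Domain R2" unfolding dom by (rule UN_E)
    note r = r1(1) r2(1) r1(2) r2(2)
    show ?thesis
    proof (cases "R1 \<subseteq> R2")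
      case True then show ?thesis using r by (meson Domain_mono subsetD)
    next
      case False then have "R2 \<subseteq> R1" using ch[OF r(1,2)] by blast
      then show ?thesis using r by (meson Domain_mono subsetD)
    qed
  qed
  obtain R0 where R0: "R0 \<in> C" using C(2) by blast
  have sfR: "is_subfield (Domain R)" if "R \<in> C" for R using allv[OF that] unfolding valid_def by blast
  have DR: "Domain R \<subseteq> Domain (\<Union>C)" if "R \<in> C" for R using that by blast
  have sf: "is_subfield (Domain (\<Union>C))"
    unfolding is_subfield_def
  proof (intro conjI ballI)
    show "0 \<in> Domain (\<Union>C)" "1 \<in> Domain (\<Union>C)" using is_subfieldD(1,2)[OF sfR[OF R0]] DR[OF R0] by blast+
  next
    fix x y assume xy: "x \<in> Domain (\<Union>C)" "y \<in> Domain (\<Union>C)"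
    then obtain R where R: "R \<in> C" "x \<in> Domain R" "y \<in> Domain R" using common by blast
    show "x + y \<in> Domain (\<Union>C)" "x * y \<in> Domain (\<Union>C)"
      using is_subfieldD(3,4)[OF sfR[OF R(1)] R(2,3)] DR[OF R(1)] by blast+
  next
    fix x assume x: "x \<in> Domain (\<Union>C)"
    then obtain R where R: "R \<in> C" "x \<in> Domain R" using dom by blast
    show "- x \<in> Domain (\<Union>C)" "inverse x \<in> Domain (\<Union>C)"
      using is_subfieldD(5,6)[OF sfR[OF R(1)] R(2)] DR[OF R(1)] by blast+
  qed
  have K: "Domain (\<Union>C) \<subseteq> Kinf c \<alpha>"
  proof
    fix x assume "x \<in> Domain (\<Union>C)"
    then obtain R where R: "R \<in> C" "x \<in> Domain R" using dom by blast
    then show "x \<in> Kinf c \<alpha>" using allv[OF R(1)] unfolding valid_def by blast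
  qed
  have hom: "hom_on (Domain (\<Union>C)) (fn (\<Union>C))"
    unfolding hom_on_def
  proof (intro ballI conjI)
    fix x y assume xy: "x \<in> Domain (\<Union>C)" "y \<in> Domain (\<Union>C)"
    then obtain R where R: "R \<in> C" "x \<in> Domain R" "y \<in> Domain R" using common by blast
    interpret fhom "Domain R" "fn R" using valid_fhom[OF allv[OF R(1)]] .
    have "x + y \<in> Domain R" "x * y \<in> Domain R" using is_subfieldD(3,4)[OF sfR[OF R(1)] R(2,3)] by auto
    then show "fn (\<Union>C) (x + y) = fn (\<Union>C) x + fn (\<Union>C) y"
      "fn (\<Union>C) (x * y) = fn (\<Union>C) x * fn (\<Union>C) y"
      using fnU[OF R(1)] R add mult by simp_all
  qed
  have ta: "(to_ac a, to_ac a) \<in> \<Union>C" for a using allv[OF R0] R0 unfolding valid_def by blast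
  show ?thesis unfolding valid_def using sv sf K hom ta by blast
qed

lemma finite_sqrts: "finite {z::'a::field. z ^ 2 = a}"
proof (cases "\<exists>r::'a. r ^ 2 = a")
  case True
  then obtain r where r: "r ^ 2 = a" by blast
  have "{z. z ^ 2 = a} \<subseteq> {r, - r}" using sq_eq_cases r by auto
  then show ?thesis by (rule finite_subset) simp
next
  case False then have "{z::'a. z ^ 2 = a} = {}" by auto
  then show ?thesis by simp
qed

lemma finite_Rt: "finite (Rt c \<alpha> n)"
proof (induction n)
  case 0
  have "Rt c \<alpha> 0 = {to_ac \<alpha>}" unfolding Rt_def by simp
  then show ?case by simp
next
  case (Suc n)
  have "Rt c \<alpha> (Suc n) \<subseteq> (\<Union>\<beta>\<in>Rt c \<alpha> n. {z. z ^ 2 = \<beta> - to_ac c})"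
  proof
    fix z assume "z \<in> Rt c \<alpha> (Suc n)"
    then have "fbar c z \<in> Rt c \<alpha> n" using Rt_Suc by blast
    then show "z \<in> (\<Union>\<beta>\<in>Rt c \<alpha> n. {z. z ^ 2 = \<beta> - to_ac c})" unfolding fbar_def by force
  qed
  moreover have "finite (\<Union>\<beta>\<in>Rt c \<alpha> n. {z. z ^ 2 = \<beta> - to_ac c})"
    using Suc finite_sqrts by blast
  ultimately show ?case by (rule finite_subset)
qed

lemma Kn_Kinf: "n \<ge> 1 \<Longrightarrow> Kn c \<alpha> n \<subseteq> Kinf c \<alpha>"
  unfolding Kinf_def by auto

lemma Ginf_intro:
  assumes hom: "hom_on (Kinf c \<alpha>) \<sigma>" and fx: "\<And>a. \<sigma> (to_ac a) = to_ac a"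
  shows "\<sigma> \<in> Ginf c \<alpha>"
proof -
  have one: "\<sigma> 1 = 1" using fx[of 1] by simp
  interpret fhom "Kinf c \<alpha>" \<sigma> using Kinf_sf hom one by unfold_locales
  note KS = Kinf_sf
  have fbK: "fbar c w \<in> Kinf c \<alpha>" if "w \<in> Kinf c \<alpha>" for w
    unfolding fbar_def using that sf_power[OF KS] is_subfieldD(3)[OF KS] Kinf_to_ac by blast
  have fbs: "\<sigma> (fbar c w) = fbar c (\<sigma> w)" if "w \<in> Kinf c \<alpha>" for w
  proof -
    have "w ^ 2 \<in> Kinf c \<alpha>" using sf_power[OF KS that] .
    then have "\<sigma> (w ^ 2 + to_ac c) = \<sigma> (w ^ 2) + \<sigma> (to_ac c)" using add[OF _ Kinf_to_ac] by blast
    then have "\<sigma> (w ^ 2 + to_ac c) = \<sigma> (w ^ 2) + to_ac c" using fx[of c] by simp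
    then show ?thesis unfolding fbar_def using sq[OF that] by simp
  qed
  have iter: "(fbar c ^^ k) z \<in> Kinf c \<alpha> \<and> \<sigma> ((fbar c ^^ k) z) = (fbar c ^^ k) (\<sigma> z)"
    if "z \<in> Kinf c \<alpha>" for z k
    using that by (induction k) (auto simp: fbK fbs)
  have mapsRt: "\<sigma> z \<in> Rt c \<alpha> n" if "n \<ge> 1" "z \<in> Rt c \<alpha> n" for n z
  proof -
    have zK: "z \<in> Kinf c \<alpha>" using Kinf_Rt that by blast
    have "(fbar c ^^ n) z = to_ac \<alpha>" using that(2) unfolding Rt_def by simp
    then have "(fbar c ^^ n) (\<sigma> z) = to_ac \<alpha>" using iter[OF zK, of n] fx by simp
    then show ?thesis unfolding Rt_def by simp
  qed
  have RtEq: "\<sigma> ` Rt c \<alpha> n = Rt c \<alpha> n" if "n \<ge> 1" for n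
  proof (rule endo_inj_surj[OF finite_Rt])
    show "\<sigma> ` Rt c \<alpha> n \<subseteq> Rt c \<alpha> n" using mapsRt[OF that] by blast
    have "Rt c \<alpha> n \<subseteq> Kinf c \<alpha>" using Kinf_Rt that by blast
    then show "inj_on \<sigma> (Rt c \<alpha> n)" using inj inj_on_subset by blast
  qed
  have KnSub: "\<sigma> ` Kn c \<alpha> n \<subseteq> Kn c \<alpha> n" if "n \<ge> 1" for n
  proof -
    define F where "F = {x \<in> Kinf c \<alpha>. \<sigma> x \<in> Kn c \<alpha> n}"
    note KnS = Kn_sf[of c \<alpha> n]
    have "is_subfield F"
      unfolding is_subfield_def
    proof (intro conjI ballI)
      show "0 \<in> F" "1 \<in> F" unfolding F_def using zero one is_subfieldD(1,2)[OF KS] is_subfieldD(1,2)[OF KnS] by auto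
    next
      fix x y assume "x \<in> F" "y \<in> F"
      then have xy: "x \<in> Kinf c \<alpha>" "y \<in> Kinf c \<alpha>" "\<sigma> x \<in> Kn c \<alpha> n" "\<sigma> y \<in> Kn c \<alpha> n"
        unfolding F_def by auto
      show "x + y \<in> F" "x * y \<in> F" unfolding F_def
        using xy add mult is_subfieldD(3,4)[OF KS xy(1,2)] is_subfieldD(3,4)[OF KnS xy(3,4)] by auto
    next
      fix x assume "x \<in> F"
      then have xy: "x \<in> Kinf c \<alpha>" "\<sigma> x \<in> Kn c \<alpha> n" unfolding F_def by auto
      show "- x \<in> F" "inverse x \<in> F" unfolding F_def
        using xy uminus inverse is_subfieldD(5,6)[OF KS xy(1)] is_subfieldD(5,6)[OF KnS xy(2)] by auto
    qed
    moreover have "range to_ac \<union> Rt c \<alpha> n \<subseteq> F"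
    proof
      fix z assume "z \<in> range to_ac \<union> Rt c \<alpha> n"
      then show "z \<in> F"
      proof
        assume "z \<in> range to_ac"
        then obtain a where "z = to_ac a" by blast
        then show "z \<in> F" unfolding F_def using fx[of a] Kinf_to_ac[of a c \<alpha>] Kn_to_ac[of a c \<alpha> n] by simp
      next
        assume z: "z \<in> Rt c \<alpha> n"
        then show "z \<in> F" unfolding F_def using mapsRt[OF that z] Kn_Rt[of "\<sigma> z"] Kinf_Rt[OF z that] by simp
      qed
    qed
    ultimately have "Kn c \<alpha> n \<subseteq> F" unfolding Kn_alt[of c \<alpha> n] by (rule gen_subfield_min)
    then show ?thesis unfolding F_def by auto
  qed
  have KnSup: "Kn c \<alpha> n \<subseteq> \<sigma> ` Kn c \<alpha> n" if "n \<ge> 1" for n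
  proof -
    note KnS = Kn_sf[of c \<alpha> n]
    have KK: "Kn c \<alpha> n \<subseteq> Kinf c \<alpha>" using Kn_Kinf[OF that] .
    have "is_subfield (\<sigma> ` Kn c \<alpha> n)"
      unfolding is_subfield_def
    proof (intro conjI ballI)
      show "0 \<in> \<sigma> ` Kn c \<alpha> n" using zero is_subfieldD(1)[OF KnS] by (metis image_eqI)
      show "1 \<in> \<sigma> ` Kn c \<alpha> n" using one is_subfieldD(2)[OF KnS] by (metis image_eqI)
    next
      fix u v assume "u \<in> \<sigma> ` Kn c \<alpha> n" "v \<in> \<sigma> ` Kn c \<alpha> n"
      then obtain x y where xy: "u = \<sigma> x" "v = \<sigma> y" "x \<in> Kn c \<alpha> n" "y \<in> Kn c \<alpha> n" by blast
      have xyK: "x \<in> Kinf c \<alpha>" "y \<in> Kinf c \<alpha>" using xy KK by auto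
      have "u + v = \<sigma> (x + y)" "u * v = \<sigma> (x * y)" using xy add[OF xyK] mult[OF xyK] by auto
      then show "u + v \<in> \<sigma> ` Kn c \<alpha> n" "u * v \<in> \<sigma> ` Kn c \<alpha> n"
        using is_subfieldD(3,4)[OF KnS xy(3,4)] by auto
    next
      fix u assume "u \<in> \<sigma> ` Kn c \<alpha> n"
      then obtain x where xy: "u = \<sigma> x" "x \<in> Kn c \<alpha> n" by blast
      have xK: "x \<in> Kinf c \<alpha>" using xy KK by auto
      have "- u = \<sigma> (- x)" "inverse u = \<sigma> (inverse x)" using xy uminus[OF xK] inverse[OF xK] by auto
      then show "- u \<in> \<sigma> ` Kn c \<alpha> n" "inverse u \<in> \<sigma> ` Kn c \<alpha> n"
        using is_subfieldD(5,6)[OF KnS xy(2)] by auto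
    qed
    moreover have "to_ac a \<in> \<sigma> ` Kn c \<alpha> n" for a
      using fx[of a] Kn_to_ac[of a c \<alpha> n] by (metis image_eqI)
    then have "range to_ac \<subseteq> \<sigma> ` Kn c \<alpha> n" by blast
    moreover have "Rt c \<alpha> n \<subseteq> \<sigma> ` Kn c \<alpha> n"
      using RtEq[OF that] Kn_Rt by (metis image_mono subsetI)
    ultimately show ?thesis unfolding Kn_alt[of c \<alpha> n] by (intro gen_subfield_min) auto
  qed
  have img: "\<sigma> ` Kinf c \<alpha> = Kinf c \<alpha>"
  proof -
    have "\<sigma> ` Kinf c \<alpha> = (\<Union>n\<in>{1..}. \<sigma> ` Kn c \<alpha> n)" unfolding Kinf_def by (rule image_UN)
    also have "\<dots> = (\<Union>n\<in>{1..}. Kn c \<alpha> n)"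
      using KnSub KnSup by (intro SUP_cong refl) (simp add: subset_antisym)
    finally show ?thesis unfolding Kinf_def .
  qed
  have "bij_betw \<sigma> (Kinf c \<alpha>) (Kinf c \<alpha>)" unfolding bij_betw_def using inj img by blast
  then show ?thesis unfolding Ginf_def using hom fx unfolding hom_on_def by blast
qed


lemma extend:
  assumes V0: "valid c \<alpha> R0"
  shows "\<exists>\<sigma>\<in>Ginf c \<alpha>. \<forall>x\<in>Domain R0. \<sigma> x = fn R0 x"
proof -
  define A where "A = {R. valid c \<alpha> R \<and> R0 \<subseteq> R}"
  have "\<forall>C\<in>chains A. \<exists>U\<in>A. \<forall>Q\<in>C. Q \<subseteq> U"
  proof
    fix C assume C: "C \<in> chains A"
    show "\<exists>U\<in>A. \<forall>Q\<in>C. Q \<subseteq> U"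
    proof (cases "C = {}")
      case True then show ?thesis using V0 unfolding A_def by blast
    next
      case False
      have CA: "C \<subseteq> A" using C unfolding chains_def by blast
      have "valid c \<alpha> (\<Union>C)"
        by (rule chain_valid[OF C False]) (use CA A_def in blast)
      moreover have "R0 \<subseteq> \<Union>C" using False CA A_def by blast
      ultimately have "\<Union>C \<in> A" unfolding A_def by blast
      then show ?thesis by blast
    qed
  qed
  from Zorn_Lemma2[OF this] obtain M where MA: "M \<in> A" and Mmax0: "\<forall>Q\<in>A. M \<subseteq> Q \<longrightarrow> Q = M"
    by blast
  have Mmax: "Q = M" if "Q \<in> A" "M \<subseteq> Q" for Q using Mmax0 that by blast
  have VM: "valid c \<alpha> M" and R0M: "R0 \<subseteq> M" using MA unfolding A_def by blast+
  have svM: "single_valued M" and sfM: "is_subfield (Domain M)" and KM: "Domain M \<subseteq> Kinf c \<alpha>"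
    and homM: "hom_on (Domain M) (fn M)" using VM unfolding valid_def by blast+
  have allRt: "Rt c \<alpha> n \<subseteq> Domain M" if "n \<ge> 1" for n
  proof (rule ccontr)
    assume "\<not> Rt c \<alpha> n \<subseteq> Domain M"
    then have ex: "\<exists>n. n \<ge> 1 \<and> (\<exists>z\<in>Rt c \<alpha> n. z \<notin> Domain M)" using that by blast
    obtain n where n: "n \<ge> 1" "\<exists>z\<in>Rt c \<alpha> n. z \<notin> Domain M"
      and least: "\<And>m. m < n \<Longrightarrow> \<not> (m \<ge> 1 \<and> (\<exists>z\<in>Rt c \<alpha> m. z \<notin> Domain M))"
      using ex[unfolded exists_least_iff[of "\<lambda>n. n \<ge> 1 \<and> (\<exists>z\<in>Rt c \<alpha> n. z \<notin> Domain M)"]] by blast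
    obtain z where z: "z \<in> Rt c \<alpha> n" "z \<notin> Domain M" using n by blast
    obtain k where k: "n = Suc k" using n(1) by (cases n) auto
    have fz: "fbar c z \<in> Rt c \<alpha> k" using z(1) k Rt_Suc by blast
    have zsq: "z ^ 2 = fbar c z - to_ac c" unfolding fbar_def by simp
    have e: "z ^ 2 \<in> Domain M"
    proof (cases "k = 0")
      case True
      then have "fbar c z = to_ac \<alpha>" using fz unfolding Rt_def by simp
      then have "z ^ 2 = to_ac (\<alpha> - c)" using zsq by simp
      then show ?thesis using valid_to_ac_dom[OF VM, of "\<alpha> - c"] by simp
    next
      case False
      then have "fbar c z \<in> Domain M" using least[of k] k fz by auto
      then show ?thesis using zsq sf_diff[OF sfM] valid_to_ac_dom[OF VM] by simp
    qed
    have zK: "z \<in> Kinf c \<alpha>" using Kinf_Rt[OF z(1) n(1)] .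
    obtain y where y: "y ^ 2 = fn M (z ^ 2)" using sqrt_ex by blast
    note st = step[OF VM zK z(2) e y]
    have "ext M z y \<in> A" unfolding A_def using st(1,2) R0M by blast
    then have "ext M z y = M" using Mmax st(2) by blast
    then have "z \<in> Domain M" using st(3) by (metis Domain.DomainI)
    then show False using z(2) by blast
  qed
  have DM: "Domain M = Kinf c \<alpha>"
  proof
    show "Domain M \<subseteq> Kinf c \<alpha>" by (rule KM)
    have "range to_ac \<subseteq> Domain M" using valid_to_ac_dom[OF VM] by blast
    then show "Kinf c \<alpha> \<subseteq> Domain M" using Kinf_sub[OF sfM] allRt by blast
  qed
  have "fn M \<in> Ginf c \<alpha>"
    by (rule Ginf_intro) (use homM DM valid_to_ac[OF VM] in auto)
  moreover have "\<forall>x\<in>Domain R0. fn M x = fn R0 x"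
  proof
    fix x assume x: "x \<in> Domain R0"
    have sv0: "single_valued R0" using V0 unfolding valid_def by blast
    have "(x, fn R0 x) \<in> M" using fn_in[OF sv0 x] R0M by blast
    then show "fn M x = fn R0 x" by (rule fn_eq[OF svM])
  qed
  ultimately show ?thesis by blast
qed


definition gq :: "'k::field \<Rightarrow> nat \<Rightarrow> 'k" where
  "gq c m = ((\<lambda>x. x ^ 2 + c) ^^ m) c"

definition Qf :: "'k::field \<Rightarrow> nat \<Rightarrow> 'k alg_closure \<Rightarrow> 'k alg_closure" where
  "Qf c m y = (if m = 0 then y - to_ac c else to_ac (gq c m) - y)"

lemma gq_Suc: "gq c (Suc m) = gq c m ^ 2 + c"
  unfolding gq_def by simp

lemma Qmul: "Qf c m z * Qf c m (- z) = to_ac (gq c (Suc m)) - z ^ 2 - to_ac c"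
proof (cases "m = 0")
  case True
  have "gq c (Suc 0) = c ^ 2 + c" using gq_Suc[of c 0] by (simp add: gq_def)
  then show ?thesis using True unfolding Qf_def by (simp add: algebra_simps power2_eq_square)
next
  case False
  then show ?thesis unfolding Qf_def gq_Suc by (simp add: algebra_simps power2_eq_square)
qed

lemma Qsq: "k \<ge> 1 \<Longrightarrow> y \<in> Rt c \<alpha> k \<Longrightarrow> \<exists>w\<in>Kinf c \<alpha>. w ^ 2 = Qf c m y"
proof (induction m arbitrary: y k)
  case 0
  obtain z where z: "z ^ 2 = y - to_ac c" using sqrt_ex by blast
  have "fbar c z = y" using z by (simp add: fbar_def)
  then have "z \<in> Rt c \<alpha> (Suc k)" using Rt_Suc 0 by metis
  then have "z \<in> Kinf c \<alpha>" using Kinf_Rt[of z c \<alpha> "Suc k"] by simp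
  then show ?case using z unfolding Qf_def by auto
next
  case (Suc m)
  obtain z where z: "z ^ 2 = y - to_ac c" using sqrt_ex by blast
  have "fbar c z = y" "fbar c (- z) = y" using z by (simp_all add: fbar_def)
  then have zR: "z \<in> Rt c \<alpha> (Suc k)" "- z \<in> Rt c \<alpha> (Suc k)" using Rt_Suc Suc.prems(2) by metis+
  obtain w1 where w1: "w1 \<in> Kinf c \<alpha>" "w1 ^ 2 = Qf c m z" using Suc.IH[OF _ zR(1)] by auto
  obtain w2 where w2: "w2 \<in> Kinf c \<alpha>" "w2 ^ 2 = Qf c m (- z)" using Suc.IH[OF _ zR(2)] by auto
  have "(w1 * w2) ^ 2 = Qf c m z * Qf c m (- z)" using w1 w2 by (simp add: power_mult_distrib)
  also have "\<dots> = Qf c (Suc m) y" unfolding Qmul using z by (simp add: Qf_def)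
  finally show ?case using w1 w2 is_subfieldD(4)[OF Kinf_sf] by blast
qed

lemma Ginf_hom: assumes "\<sigma> \<in> Ginf c \<alpha>" shows "fhom (Kinf c \<alpha>) \<sigma>"
proof -
  have h: "hom_on (Kinf c \<alpha>) \<sigma>" using assms unfolding Ginf_def hom_on_def by blast
  have "\<sigma> (to_ac 1) = to_ac 1" using assms unfolding Ginf_def by blast
  then have "\<sigma> 1 = 1" by simp
  then show ?thesis unfolding fhom_def using h Kinf_sf by blast
qed

lemma Ginf_fix: "\<sigma> \<in> Ginf c \<alpha> \<Longrightarrow> \<sigma> (to_ac a) = to_ac a"
  unfolding Ginf_def by blast

lemma Ginf_maps: "\<sigma> \<in> Ginf c \<alpha> \<Longrightarrow> x \<in> Kinf c \<alpha> \<Longrightarrow> \<sigma> x \<in> Kinf c \<alpha>"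
  unfolding Ginf_def bij_betw_def by blast

lemma Ginf_Q: assumes "\<sigma> \<in> Ginf c \<alpha>" "y \<in> Kinf c \<alpha>" shows "\<sigma> (Qf c m y) = Qf c m (\<sigma> y)"
proof -
  interpret fhom "Kinf c \<alpha>" \<sigma> using Ginf_hom[OF assms(1)] .
  show ?thesis unfolding Qf_def
    using diff[OF assms(2) Kinf_to_ac] diff[OF Kinf_to_ac assms(2)] Ginf_fix[OF assms(1)] by simp
qed

lemma funpow_to_ac: "(fbar c ^^ k) (to_ac x) = to_ac (((\<lambda>x. x ^ 2 + c) ^^ k) x)"
  by (induction k) (simp_all add: fbar_def)

lemma cseq_alpha_SS: "cseq_alpha c \<alpha> (Suc (Suc m)) = gq c (Suc m) - \<alpha>"
proof -
  have "cseq c (Suc (Suc m)) = ((\<lambda>x. x ^ 2 + c) ^^ Suc m) (- c)" unfolding cseq_def by simp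
  also have "\<dots> = ((\<lambda>x. x ^ 2 + c) ^^ m) ((- c) ^ 2 + c)" by (simp only: funpow_Suc_right comp_def)
  also have "\<dots> = ((\<lambda>x. x ^ 2 + c) ^^ m) (c ^ 2 + c)" by simp
  also have "\<dots> = gq c (Suc m)" unfolding gq_def by (simp only: funpow_Suc_right comp_def)
  finally show ?thesis unfolding cseq_alpha_def by simp
qed

lemma cseq_alpha_1: "cseq_alpha c \<alpha> 1 = \<alpha> - c"
  unfolding cseq_alpha_def cseq_def by simp

lemma cseq_alpha_nz:
  assumes orb: "0 \<notin> backward_orbit c \<alpha>"
  shows "cseq_alpha c \<alpha> (Suc (Suc m)) \<noteq> 0"
proof
  assume "cseq_alpha c \<alpha> (Suc (Suc m)) = 0"
  then have g: "gq c (Suc m) = \<alpha>" using cseq_alpha_SS[of c \<alpha> m] by simp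
  have "(fbar c ^^ Suc (Suc m)) 0 = (fbar c ^^ Suc m) (fbar c 0)" by (simp only: funpow_Suc_right comp_def)
  also have "fbar c 0 = to_ac c" by (simp add: fbar_def)
  also have "(fbar c ^^ Suc m) (to_ac c) = to_ac (gq c (Suc m))" unfolding funpow_to_ac gq_def ..
  finally have "(fbar c ^^ Suc (Suc m)) 0 = to_ac \<alpha>" using g by simp
  then have "0 \<in> backward_orbit c \<alpha>" unfolding backward_orbit_def
    by (intro CollectI exI[of _ "Suc (Suc m)"]) simp
  then show False using orb by blast
qed

definition baseR :: "('k::field alg_closure \<times> 'k alg_closure) set" where
  "baseR = (\<lambda>a. (to_ac a, to_ac a)) ` UNIV"

lemma baseR_valid: fixes c \<alpha> :: "'k::field" shows "valid c \<alpha> baseR"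
proof -
  have sv: "single_valued baseR" unfolding single_valued_def baseR_def by auto
  have dom: "Domain baseR = range to_ac" unfolding baseR_def by force
  have fnB: "fn baseR (to_ac a) = to_ac a" for a
    by (rule fn_eq[OF sv]) (auto simp: baseR_def)
  have sf: "is_subfield (range to_ac :: 'k alg_closure set)"
    unfolding is_subfield_def
  proof (intro conjI ballI)
    show "(0 :: 'k alg_closure) \<in> range to_ac" by (metis rangeI to_ac_0)
    show "(1 :: 'k alg_closure) \<in> range to_ac" by (metis rangeI to_ac_1)
  next
    fix x y :: "'k alg_closure" assume "x \<in> range to_ac" "y \<in> range to_ac"
    then obtain a b where "x = to_ac a" "y = to_ac b" by blast
    then show "x + y \<in> range to_ac" "x * y \<in> range to_ac" by (metis rangeI to_ac_add, metis rangeI to_ac_mult)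
  next
    fix x :: "'k alg_closure" assume "x \<in> range to_ac"
    then obtain a where "x = to_ac a" by blast
    then show "- x \<in> range to_ac" "inverse x \<in> range to_ac" by (metis rangeI to_ac_minus, metis rangeI to_ac_inverse)
  qed
  have h: "fn baseR (to_ac a + to_ac b) = fn baseR (to_ac a) + fn baseR (to_ac b) \<and>
            fn baseR (to_ac a * to_ac b) = fn baseR (to_ac a) * fn baseR (to_ac b)" for a b :: 'k
    unfolding to_ac_add[symmetric] to_ac_mult[symmetric] fnB by simp
  have hom: "hom_on (range (to_ac :: 'k \<Rightarrow> _)) (fn baseR)"
    unfolding hom_on_def using h by blast
  have K: "range to_ac \<subseteq> Kinf c \<alpha>" using Kinf_to_ac by blast
  have "(to_ac a, to_ac a) \<in> baseR" for a unfolding baseR_def by blast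
  then show ?thesis unfolding valid_def dom using sv sf hom K by blast
qed

lemma baseR_dom: "Domain baseR = range to_ac"
  unfolding baseR_def by force


lemma ext_fn_at:
  assumes "valid c \<alpha> R'" "(x, y) \<in> R'" "\<forall>z\<in>Domain R'. \<sigma> z = fn R' z"
  shows "\<sigma> x = y"
proof -
  have sv: "single_valued R'" using assms(1) unfolding valid_def by blast
  have "x \<in> Domain R'" using assms(2) by blast
  then have "\<sigma> x = fn R' x" using assms(3) by blast
  then show ?thesis using fn_eq[OF sv assms(2)] by simp
qed

lemma main_sq:
  fixes c \<alpha> :: "'k::field"
  assumes two: "(2::'k) \<noteq> 0" and orb: "0 \<notin> backward_orbit c \<alpha>" and ab: "Ginf_abelian c \<alpha>"
    and ns: "\<not> (\<exists>r. r ^ 2 = \<alpha> - c)"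
  shows "\<exists>r. r \<noteq> 0 \<and> (cseq_alpha c \<alpha> (Suc (Suc m)) = r ^ 2 \<or> cseq_alpha c \<alpha> (Suc (Suc m)) = (\<alpha> - c) * r ^ 2)"
proof (rule ccontr)
  assume H: "\<not> ?thesis"
  define cn where "cn = cseq_alpha c \<alpha> (Suc (Suc m))"
  define d where "d = \<alpha> - c"
  have two': "(2 :: 'k alg_closure) \<noteq> 0" using two by (metis to_ac_eq_0_iff to_ac_numeral)
  have cn0: "cn \<noteq> 0" unfolding cn_def by (rule cseq_alpha_nz[OF orb])
  have H': "\<And>r. r \<noteq> 0 \<Longrightarrow> cn \<noteq> r ^ 2 \<and> cn \<noteq> d * r ^ 2" using H unfolding cn_def d_def by blast
  obtain s :: "'k alg_closure" where s: "s ^ 2 = to_ac d" using sqrt_ex by blast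
  have fs: "fbar c s = to_ac \<alpha>" using s unfolding fbar_def d_def by simp
  have sR: "s \<in> Rt c \<alpha> 1" unfolding Rt_def using fs by simp
  have sK: "s \<in> Kinf c \<alpha>" using Kinf_Rt[OF sR] by simp
  have snr: "s \<notin> range to_ac"
  proof
    assume "s \<in> range to_ac"
    then obtain r where "s = to_ac r" by blast
    then have "to_ac (r ^ 2) = to_ac d" using s by simp
    then have "r ^ 2 = \<alpha> - c" unfolding d_def to_ac_eq_iff .
    then show False using ns by blast
  qed
  note VB = baseR_valid[of c \<alpha>]
  have fnB: "fn baseR (to_ac a) = to_ac a" for a :: 'k using valid_to_ac[OF VB] .
  have dB: "Domain (baseR :: ('k alg_closure \<times> 'k alg_closure) set) = range to_ac" by (rule baseR_dom)
  have sB: "s \<notin> Domain baseR" using snr dB by simp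
  have eB: "s ^ 2 \<in> Domain baseR" using s dB by simp
  have yt: "(- s) ^ 2 = fn baseR (s ^ 2)" using s fnB by simp
  note stt = step[OF VB sK sB eB yt]
  obtain t where t: "t \<in> Ginf c \<alpha>" and tagree: "\<forall>z\<in>Domain (ext baseR s (- s)). t z = fn (ext baseR s (- s)) z"
    using extend[OF stt(1)] by blast
  have ts: "t s = - s" by (rule ext_fn_at[OF stt(1) stt(3) tagree])
  interpret T: fhom "Kinf c \<alpha>" t using Ginf_hom[OF t] .
  obtain w where wK: "w \<in> Kinf c \<alpha>" and w: "w ^ 2 = Qf c m s" using Qsq[OF _ sR] by auto
  define w' where "w' = t w"
  have w'K: "w' \<in> Kinf c \<alpha>" unfolding w'_def using Ginf_maps[OF t wK] .
  have w': "w' ^ 2 = Qf c m (- s)"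
    unfolding w'_def using T.sq[OF wK] w Ginf_Q[OF t sK] ts by simp
  define v where "v = w * w'"
  have vK: "v \<in> Kinf c \<alpha>" unfolding v_def using is_subfieldD(4)[OF Kinf_sf wK w'K] .
  have v2: "v ^ 2 = to_ac cn"
  proof -
    have "v ^ 2 = Qf c m s * Qf c m (- s)" unfolding v_def using w w' by (simp add: power_mult_distrib)
    also have "\<dots> = to_ac (gq c (Suc m)) - s ^ 2 - to_ac c" by (rule Qmul)
    also have "\<dots> = to_ac cn" unfolding cn_def cseq_alpha_SS using s d_def by simp
    finally show ?thesis .
  qed
  have v0: "v \<noteq> 0" using v2 cn0 by auto
  have yg1: "s ^ 2 = fn baseR (s ^ 2)" using s fnB by simp
  note st1 = step[OF VB sK sB eB yg1]
  define R1 where "R1 = ext baseR s s"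
  have V1: "valid c \<alpha> R1" and s1: "(s, s) \<in> R1" using st1 unfolding R1_def by blast+
  have D1: "Domain R1 = {a + b * s | a b. a \<in> range to_ac \<and> b \<in> range to_ac}"
    using st1(4) dB unfolding R1_def by simp
  have vn: "v \<notin> Domain R1"
  proof
    assume "v \<in> Domain R1"
    then obtain a b where ab: "v = to_ac a + to_ac b * s" using D1 by blast
    have "v ^ 2 = to_ac (a ^ 2 + b ^ 2 * d) + to_ac (2 * a * b) * s"
      unfolding ab using s by (simp add: algebra_simps power2_eq_square)
    then have eq: "to_ac (2 * a * b) * s = to_ac (cn - (a ^ 2 + b ^ 2 * d))" using v2 by (simp add: algebra_simps)
    show False
    proof (cases "2 * a * b = 0")
      case False
      have X0: "to_ac (2 * a * b) \<noteq> 0" using False two' by simp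
      have "s = to_ac (cn - (a ^ 2 + b ^ 2 * d)) / to_ac (2 * a * b)"
        using X0 eq by (metis nonzero_mult_div_cancel_left)
      then have "s = to_ac ((cn - (a ^ 2 + b ^ 2 * d)) / (2 * a * b))" by (simp only: to_ac_divide)
      then show False using snr by blast
    next
      case True
      then have "a = 0 \<or> b = 0" using two by simp
      then show False
      proof
        assume a: "a = 0"
        then have "to_ac cn = to_ac (d * b ^ 2)" using v2 ab s by (simp add: power_mult_distrib mult.commute)
        then have "cn = d * b ^ 2" by (simp only: to_ac_eq_iff)
        moreover have "b \<noteq> 0" using a ab v0 by auto
        ultimately show False using H' by blast
      next
        assume b: "b = 0"
        then have "to_ac cn = to_ac (a ^ 2)" using v2 ab by simp
        then have "cn = a ^ 2" by (simp only: to_ac_eq_iff)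
        moreover have "a \<noteq> 0" using b ab v0 by auto
        ultimately show False using H' by blast
      qed
    qed
  qed
  have fn1: "fn R1 (to_ac a) = to_ac a" for a using valid_to_ac[OF V1] .
  have e1: "v ^ 2 \<in> Domain R1" using v2 valid_to_ac_dom[OF V1] by simp
  have yg: "(- v) ^ 2 = fn R1 (v ^ 2)" using v2 fn1 by simp
  note st2 = step[OF V1 vK vn e1 yg]
  obtain g where g: "g \<in> Ginf c \<alpha>" and gagree: "\<forall>z\<in>Domain (ext R1 v (- v)). g z = fn (ext R1 v (- v)) z"
    using extend[OF st2(1)] by blast
  have gv: "g v = - v" by (rule ext_fn_at[OF st2(1) st2(3) gagree])
  have gs: "g s = s" by (rule ext_fn_at[OF st2(1) _ gagree]) (use st2(2) s1 in blast)
  interpret G: fhom "Kinf c \<alpha>" g using Ginf_hom[OF g] .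
  have "g w ^ 2 = w ^ 2" using G.sq[OF wK] w Ginf_Q[OF g sK] gs by simp
  then have gw: "g w = w \<or> g w = - w" by (rule sq_eq_cases)
  have comm: "g (t w) = t (g w)" using ab g t wK unfolding Ginf_abelian_def by blast
  have "g v = v"
  proof -
    have "g v = g w * g w'" unfolding v_def using G.mult[OF wK w'K] .
    also have "\<dots> = w * w'"
      using gw
    proof
      assume "g w = w" then show ?thesis using comm w'_def by simp
    next
      assume "g w = - w"
      then have "g w' = - w'" using comm T.uminus[OF wK] w'_def by simp
      then show ?thesis using \<open>g w = - w\<close> by simp
    qed
    finally show ?thesis unfolding v_def .
  qed
  then have "v = - v" using gv by simp
  then have "2 * v = 0" by simp
  then show False using v0 two' by simp
qed


lemma irred_nonsq:
  fixes c \<alpha> :: "'k::field"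
  assumes irr: "irreducible [:c - \<alpha>, 0, 1:]"
  shows "\<not> (\<exists>r. r ^ 2 = \<alpha> - c)"
proof
  assume "\<exists>r. r ^ 2 = \<alpha> - c"
  then obtain r where r: "r ^ 2 = \<alpha> - c" by blast
  have "[:c - \<alpha>, 0, 1:] = [:- r, 1:] * [:r, 1:]"
    using r by (simp add: power2_eq_square algebra_simps)
  then have "[:- r, 1:] dvd 1 \<or> [:r, 1:] dvd 1" using Factorial_Ring.irreducibleD[OF irr] by blast
  then show False unfolding is_unit_poly_iff by auto
qed

lemma sq_class_mult: "r \<noteq> 0 \<Longrightarrow> sq_class (x * r ^ 2) = sq_class (x::'k::field)"
proof -
  assume r: "r \<noteq> 0"
  show ?thesis unfolding sq_class_def
  proof (intro equalityI subsetI)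
    fix z assume "z \<in> {x * r ^ 2 * y ^ 2 |y. y \<noteq> 0}"
    then obtain y where y: "z = x * r ^ 2 * y ^ 2" "y \<noteq> 0" by blast
    then have "z = x * (r * y) ^ 2" "r * y \<noteq> 0" using r by (simp_all add: power_mult_distrib)
    then show "z \<in> {x * y ^ 2 |y. y \<noteq> 0}" by blast
  next
    fix z assume "z \<in> {x * y ^ 2 |y. y \<noteq> 0}"
    then obtain y where y: "z = x * y ^ 2" "y \<noteq> 0" by blast
    then have "z = x * r ^ 2 * (y / r) ^ 2" "y / r \<noteq> 0" using r by (simp_all add: power_divide)
    then show "z \<in> {x * r ^ 2 * y ^ 2 |y. y \<noteq> 0}" by blast
  qed
qed

theorem theorem3p3:
  fixes c \<alpha> :: "'k::field"
  assumes "(2::'k) \<noteq> 0"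
    and "0 \<notin> backward_orbit c \<alpha>"
    and "Ginf_abelian c \<alpha>"
    and "irreducible [:c - \<alpha>, 0, 1:]"
  shows "card (c_span c \<alpha>) = 2"
proof -
  define d where "d = \<alpha> - c"
  have ns: "\<not> (\<exists>r. r ^ 2 = \<alpha> - c)" by (rule irred_nonsq[OF assms(4)])
  have d0: "d \<noteq> 0" using ns unfolding d_def by (metis zero_power2)
  have each: "\<exists>r. r \<noteq> 0 \<and> (cseq_alpha c \<alpha> n = r ^ 2 \<or> cseq_alpha c \<alpha> n = d * r ^ 2)" if "n \<ge> 1" for n
  proof (cases "n = 1")
    case True
    then show ?thesis using cseq_alpha_1[of c \<alpha>] unfolding d_def by (intro exI[of _ 1]) simp
  next
    case False
    have nn: "n = Suc (Suc (n - 2))" using that False by simp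
    show ?thesis using main_sq[OF assms(1-3) ns, of "n - 2"] unfolding d_def nn[symmetric] .
  qed
  have prod: "\<exists>r. r \<noteq> 0 \<and> ((\<Prod>n\<in>S. cseq_alpha c \<alpha> n) = r ^ 2 \<or> (\<Prod>n\<in>S. cseq_alpha c \<alpha> n) = d * r ^ 2)"
    if "finite S" "S \<subseteq> {1..}" for S
    using that
  proof (induction S rule: finite_induct)
    case empty
    then show ?case by (intro exI[of _ 1]) simp
  next
    case (insert n S)
    have Ssub: "S \<subseteq> {1..}" and n1: "n \<ge> 1" using insert.prems by simp_all
    obtain r where r: "r \<noteq> 0" "(\<Prod>n\<in>S. cseq_alpha c \<alpha> n) = r ^ 2 \<or> (\<Prod>n\<in>S. cseq_alpha c \<alpha> n) = d * r ^ 2"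
      using insert.IH[OF Ssub] by blast
    obtain q where q: "q \<noteq> 0" "cseq_alpha c \<alpha> n = q ^ 2 \<or> cseq_alpha c \<alpha> n = d * q ^ 2"
      using each[OF n1] by blast
    have P: "(\<Prod>n\<in>insert n S. cseq_alpha c \<alpha> n) = cseq_alpha c \<alpha> n * (\<Prod>n\<in>S. cseq_alpha c \<alpha> n)"
      using insert.hyps by simp
    show ?case
      using r(2) q(2)
    proof (elim disjE)
      assume a: "(\<Prod>n\<in>S. cseq_alpha c \<alpha> n) = r ^ 2" and b: "cseq_alpha c \<alpha> n = q ^ 2"
      show ?thesis using P a b r(1) q(1) by (intro exI[of _ "q * r"]) (simp add: power_mult_distrib)
    next
      assume a: "(\<Prod>n\<in>S. cseq_alpha c \<alpha> n) = d * r ^ 2" and b: "cseq_alpha c \<alpha> n = q ^ 2"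
      show ?thesis using P a b r(1) q(1) by (intro exI[of _ "q * r"]) (simp add: power_mult_distrib)
    next
      assume a: "(\<Prod>n\<in>S. cseq_alpha c \<alpha> n) = r ^ 2" and b: "cseq_alpha c \<alpha> n = d * q ^ 2"
      show ?thesis using P a b r(1) q(1) by (intro exI[of _ "q * r"]) (simp add: power_mult_distrib)
    next
      assume a: "(\<Prod>n\<in>S. cseq_alpha c \<alpha> n) = d * r ^ 2" and b: "cseq_alpha c \<alpha> n = d * q ^ 2"
      show ?thesis using P a b r(1) q(1) d0 by (intro exI[of _ "d * q * r"]) (simp add: power_mult_distrib power2_eq_square)
    qed
  qed
  have cls: "sq_class (\<Prod>n\<in>S. cseq_alpha c \<alpha> n) \<in> {sq_class 1, sq_class d}"
    if fin: "finite S" and sub: "S \<subseteq> {1..}" for S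
  proof -
    obtain r where r: "r \<noteq> 0" "(\<Prod>n\<in>S. cseq_alpha c \<alpha> n) = r ^ 2 \<or> (\<Prod>n\<in>S. cseq_alpha c \<alpha> n) = d * r ^ 2"
      using prod[OF fin sub] by blast
    have e1: "sq_class (r ^ 2) = sq_class 1" using sq_class_mult[OF r(1), of 1] by simp
    have e2: "sq_class (d * r ^ 2) = sq_class d" using sq_class_mult[OF r(1), of d] by simp
    from r(2) show ?thesis
    proof
      assume "(\<Prod>n\<in>S. cseq_alpha c \<alpha> n) = r ^ 2" then show ?thesis using e1 by simp
    next
      assume "(\<Prod>n\<in>S. cseq_alpha c \<alpha> n) = d * r ^ 2" then show ?thesis using e2 by simp
    qed
  qed
  have span: "c_span c \<alpha> = {sq_class 1, sq_class d}"
  proof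
    show "c_span c \<alpha> \<subseteq> {sq_class 1, sq_class d}" unfolding c_span_def using cls by blast
  next
    have "sq_class 1 = sq_class (\<Prod>n\<in>{}. cseq_alpha c \<alpha> n)" by simp
    then have "sq_class 1 \<in> c_span c \<alpha>" unfolding c_span_def by blast
    moreover have "sq_class d = sq_class (\<Prod>n\<in>{1}. cseq_alpha c \<alpha> n)" using cseq_alpha_1[of c \<alpha>] d_def by simp
    then have "sq_class d \<in> c_span c \<alpha>" unfolding c_span_def by fastforce
    ultimately show "{sq_class 1, sq_class d} \<subseteq> c_span c \<alpha>" by blast
  qed
  have neq: "sq_class 1 \<noteq> sq_class d"
  proof
    assume e: "sq_class 1 = sq_class d"
    have "(1::'k) \<in> sq_class 1" unfolding sq_class_def by (intro CollectI exI[of _ 1]) simp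
    then have "1 \<in> sq_class d" using e by simp
    then obtain y where y: "1 = d * y ^ 2" "y \<noteq> 0" unfolding sq_class_def by blast
    then have "d = (inverse y) ^ 2" by (simp add: field_simps power2_eq_square)
    then show False using ns d_def by blast
  qed
  show ?thesis unfolding span using neq by simp
qed

end
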